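(* Let $V$ be a set with $\#V=\aleph_0$, let $k:V\times V\to\mathbb{C}$ be a positive definite function, and let $\mathscr{H}=\mathscr{H}(k)$ be the corresponding reproducing kernel Hilbert space. Assume $\delta_x\in\mathscr{H}$ for all $x\in V$. Then there are closable operators $T:\mathscr{H}\to\ell^2(V)$ with domain $\mathrm{span}\{k_x:x\in V\}$ and $S:\ell^2(V)\to\mathscr{H}$ with domain $\mathrm{span}\{\delta_x:x\in V\}$ such that $T\subseteq S^*$, $S\subseteq T^*$, and $$Tk_x=\delta_x,\qquad S\delta_x=\delta_x\qquad\text{for all }x\in V.$$
   Context: $\delta_x(y)=1$ if $y=x$ and $0$ otherwise. A function $k:V\times V\to\mathbb{C}$ is positive definite if $\sum_{x\in F}\sum_{y\in F}k(x,y)\overline{c_x}c_y\ge 0$ for every finite $F\subset V$ and all $\{c_x\}\subset\mathbb{C}$. For $x\in V$ let $k_x:=k(\cdot,x)$. The RKHS $\mathscr{H}(k)$ is the Hilbert completion of $\mathrm{span}\{k_x\}$ with respect to $\langle\sum_x c_xk_x,\sum_y d_yk_y\rangle_{\mathscr{H}}=\sum\sum\overline{c_x}d_yk(x,y)$ (modulo null vectors); it is a Hilbert space of functions on $V$ with $\langle k_x,\varphi\rangle_{\mathscr{H}}=\varphi(x)$ for all $x\in V$, $\varphi\in\mathscr{H}$. *)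

theory Defs
  imports "HOL-Analysis.Analysis"
begin

text \<open>Functions on V are modelled as elements of type 'v => complex, where the
countably infinite set V is the type 'v.\<close>

definition pos_def_kernel :: "('v \<Rightarrow> 'v \<Rightarrow> complex) \<Rightarrow> bool" where
  "pos_def_kernel k \<longleftrightarrow>
     (\<forall>F (c :: 'v \<Rightarrow> complex). finite F \<longrightarrow>
        (let s = (\<Sum>x\<in>F. \<Sum>y\<in>F. k x y * cnj (c x) * c y) in Im s = 0 \<and> Re s \<ge> 0))"

definition kfun :: "('v \<Rightarrow> 'v \<Rightarrow> complex) \<Rightarrow> 'v \<Rightarrow> ('v \<Rightarrow> complex)" where
  "kfun k x = (\<lambda>y. k y x)"

definition delta :: "'v \<Rightarrow> ('v \<Rightarrow> complex)" where
  "delta x = (\<lambda>y. if y = x then 1 else 0)"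

definition kspan :: "('v \<Rightarrow> 'v \<Rightarrow> complex) \<Rightarrow> ('v \<Rightarrow> complex) set" where
  "kspan k = {f. \<exists>F c. finite F \<and> f = (\<lambda>z. \<Sum>x\<in>F. c x * kfun k x z)}"

definition dspan :: "('v \<Rightarrow> complex) set" where
  "dspan = {f. \<exists>F c. finite F \<and> f = (\<lambda>z. \<Sum>x\<in>F. c x * delta x z)}"

definition pre_ip :: "('v \<Rightarrow> 'v \<Rightarrow> complex) \<Rightarrow> ('v \<Rightarrow> complex) \<Rightarrow> ('v \<Rightarrow> complex) \<Rightarrow> complex" where
  "pre_ip k f g =
     (let (F, c) = (SOME (F, c). finite F \<and> f = (\<lambda>z. \<Sum>x\<in>F. c x * kfun k x z))
      in \<Sum>x\<in>F. cnj (c x) * g x)"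

definition approx_seq :: "('v \<Rightarrow> 'v \<Rightarrow> complex) \<Rightarrow> ('v \<Rightarrow> complex) \<Rightarrow> (nat \<Rightarrow> 'v \<Rightarrow> complex) \<Rightarrow> bool" where
  "approx_seq k \<phi> fs \<longleftrightarrow>
     (\<forall>n. fs n \<in> kspan k) \<and>
     (\<forall>e>0. \<exists>N. \<forall>m\<ge>N. \<forall>n\<ge>N. Re (pre_ip k (fs m - fs n) (fs m - fs n)) < e) \<and>
     (\<forall>x. (\<lambda>n. fs n x) \<longlonglongrightarrow> \<phi> x)"

text \<open>The RKHS H(k), realised as a space of functions on V (Hilbert completion of span{k_x}).\<close>
definition rkhs :: "('v \<Rightarrow> 'v \<Rightarrow> complex) \<Rightarrow> ('v \<Rightarrow> complex) set" where
  "rkhs k = {\<phi>. \<exists>fs. approx_seq k \<phi> fs}"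

definition rkhs_ip :: "('v \<Rightarrow> 'v \<Rightarrow> complex) \<Rightarrow> ('v \<Rightarrow> complex) \<Rightarrow> ('v \<Rightarrow> complex) \<Rightarrow> complex" where
  "rkhs_ip k \<phi> \<psi> =
     lim (\<lambda>n. pre_ip k ((SOME fs. approx_seq k \<phi> fs) n) ((SOME gs. approx_seq k \<psi> gs) n))"

definition l2 :: "('v \<Rightarrow> complex) set" where
  "l2 = {f. (\<lambda>x. (cmod (f x))\<^sup>2) summable_on UNIV}"

definition l2_ip :: "('v \<Rightarrow> complex) \<Rightarrow> ('v \<Rightarrow> complex) \<Rightarrow> complex" where
  "l2_ip f g = (\<Sum>\<^sub>\<infinity>x. cnj (f x) * g x)"

definition ipnorm :: "(('v \<Rightarrow> complex) \<Rightarrow> ('v \<Rightarrow> complex) \<Rightarrow> complex) \<Rightarrow> ('v \<Rightarrow> complex) \<Rightarrow> real" where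
  "ipnorm ip u = sqrt (Re (ip u u))"

definition lin_op :: "('v \<Rightarrow> complex) set \<Rightarrow> ('v \<Rightarrow> complex) set \<Rightarrow>
     (('v \<Rightarrow> complex) \<Rightarrow> ('v \<Rightarrow> complex)) \<Rightarrow> bool" where
  "lin_op D B T \<longleftrightarrow> (\<forall>u\<in>D. T u \<in> B) \<and>
     (\<forall>u\<in>D. \<forall>v\<in>D. \<forall>a b :: complex.
        T (\<lambda>z. a * u z + b * v z) = (\<lambda>z. a * T u z + b * T v z))"

definition graph_closure ::
  "('v \<Rightarrow> complex) set \<Rightarrow> (('v \<Rightarrow> complex) \<Rightarrow> ('v \<Rightarrow> complex) \<Rightarrow> complex) \<Rightarrow>
   ('v \<Rightarrow> complex) set \<Rightarrow> (('v \<Rightarrow> complex) \<Rightarrow> ('v \<Rightarrow> complex) \<Rightarrow> complex) \<Rightarrow>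
   ('v \<Rightarrow> complex) set \<Rightarrow> (('v \<Rightarrow> complex) \<Rightarrow> ('v \<Rightarrow> complex)) \<Rightarrow>
   (('v \<Rightarrow> complex) \<times> ('v \<Rightarrow> complex)) set" where
  "graph_closure A ipA B ipB D T =
     {(u, w). u \<in> A \<and> w \<in> B \<and>
        (\<exists>us. (\<forall>n. us n \<in> D) \<and> (\<lambda>n. ipnorm ipA (us n - u)) \<longlonglongrightarrow> 0 \<and>
              (\<lambda>n. ipnorm ipB (T (us n) - w)) \<longlonglongrightarrow> 0)}"

definition closable ::
  "('v \<Rightarrow> complex) set \<Rightarrow> (('v \<Rightarrow> complex) \<Rightarrow> ('v \<Rightarrow> complex) \<Rightarrow> complex) \<Rightarrow>
   ('v \<Rightarrow> complex) set \<Rightarrow> (('v \<Rightarrow> complex) \<Rightarrow> ('v \<Rightarrow> complex) \<Rightarrow> complex) \<Rightarrow>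
   ('v \<Rightarrow> complex) set \<Rightarrow> (('v \<Rightarrow> complex) \<Rightarrow> ('v \<Rightarrow> complex)) \<Rightarrow> bool" where
  "closable A ipA B ipB D T \<longleftrightarrow>
     (\<forall>u w1 w2. (u, w1) \<in> graph_closure A ipA B ipB D T \<longrightarrow>
                (u, w2) \<in> graph_closure A ipA B ipB D T \<longrightarrow> w1 = w2)"

definition adjoint_graph ::
  "('v \<Rightarrow> complex) set \<Rightarrow> (('v \<Rightarrow> complex) \<Rightarrow> ('v \<Rightarrow> complex) \<Rightarrow> complex) \<Rightarrow>
   ('v \<Rightarrow> complex) set \<Rightarrow> (('v \<Rightarrow> complex) \<Rightarrow> ('v \<Rightarrow> complex) \<Rightarrow> complex) \<Rightarrow>
   ('v \<Rightarrow> complex) set \<Rightarrow> (('v \<Rightarrow> complex) \<Rightarrow> ('v \<Rightarrow> complex)) \<Rightarrow>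
   (('v \<Rightarrow> complex) \<times> ('v \<Rightarrow> complex)) set" where
  "adjoint_graph A ipA B ipB D T =
     {(u, w). u \<in> B \<and> w \<in> A \<and> (\<forall>v\<in>D. ipB (T v) u = ipA v w)}"

definition graph :: "('v \<Rightarrow> complex) set \<Rightarrow> (('v \<Rightarrow> complex) \<Rightarrow> ('v \<Rightarrow> complex)) \<Rightarrow>
   (('v \<Rightarrow> complex) \<times> ('v \<Rightarrow> complex)) set" where
  "graph D T = {(u, T u) | u. u \<in> D}"

end

theory Submission
  imports Defs "HOL-Library.Function_Algebras"
begin

locale rk = fixes k :: "'v \<Rightarrow> 'v \<Rightarrow> complex" assumes pd: "pos_def_kernel k"
begin

lemma pdI: assumes "finite F"
  shows "Im (\<Sum>x\<in>F. \<Sum>y\<in>F. k x y * cnj (c x) * c y) = 0 \<and> Re (\<Sum>x\<in>F. \<Sum>y\<in>F. k x y * cnj (c x) * c y) \<ge> 0"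
  using pd[unfolded pos_def_kernel_def Let_def, rule_format, OF assms, of c] .

lemma kxx_real: "Im (k x x) = 0"
proof -
  have "Im (\<Sum>a\<in>{x}. \<Sum>b\<in>{x}. k a b * cnj ((\<lambda>_. 1::complex) a) * (\<lambda>_. 1) b) = 0"
    by (rule conjunct1[OF pdI]) simp
  thus ?thesis by simp
qed

lemma herm: "k y x = cnj (k x y)"
proof (cases "x = y")
  case True thus ?thesis using kxx_real[of x] by (simp add: complex_eq_iff)
next
  case False
  define c1 :: "'v \<Rightarrow> complex" where "c1 = (\<lambda>_. 1)"
  define c2 :: "'v \<Rightarrow> complex" where "c2 = (\<lambda>z. if z = y then \<i> else 1)"
  have a1: "Im (\<Sum>a\<in>{x,y}. \<Sum>b\<in>{x,y}. k a b * cnj (c1 a) * c1 b) = 0"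
    by (rule conjunct1[OF pdI]) simp
  have a2: "Im (\<Sum>a\<in>{x,y}. \<Sum>b\<in>{x,y}. k a b * cnj (c2 a) * c2 b) = 0"
    by (rule conjunct1[OF pdI]) simp
  have e1: "(\<Sum>a\<in>{x,y}. \<Sum>b\<in>{x,y}. k a b * cnj (c1 a) * c1 b) = k x x + k x y + (k y x + k y y)"
    using False by (simp add: c1_def)
  have e2: "(\<Sum>a\<in>{x,y}. \<Sum>b\<in>{x,y}. k a b * cnj (c2 a) * c2 b) = k x x + k x y * \<i> + (k y x * (- \<i>) + k y y * (- \<i>) * \<i>)"
    using False by (simp add: c2_def)
  have i1: "Im (k x y) + Im (k y x) = 0" using a1 kxx_real[of x] kxx_real[of y] unfolding e1 by simp
  have i2: "Re (k x y) - Re (k y x) = 0" using a2 kxx_real[of x] kxx_real[of y] unfolding e2 by simp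
  show ?thesis using i1 i2 by (simp add: complex_eq_iff)
qed

definition ks :: "('v \<Rightarrow> complex) \<Rightarrow> 'v set \<Rightarrow> ('v \<Rightarrow> complex)" where
  "ks c F = (\<lambda>z. \<Sum>x\<in>F. c x * kfun k x z)"

lemma kspan_iff: "f \<in> kspan k \<longleftrightarrow> (\<exists>F c. finite F \<and> f = ks c F)"
  unfolding kspan_def ks_def by (rule mem_Collect_eq)

lemma swap: assumes "finite F" "finite G"
  shows "(\<Sum>x\<in>F. cnj (c x) * ks a G x) = (\<Sum>z\<in>G. a z * cnj (ks c F z))"
proof -
  have "(\<Sum>x\<in>F. cnj (c x) * ks a G x) = (\<Sum>x\<in>F. \<Sum>z\<in>G. cnj (c x) * a z * k x z)"
    unfolding ks_def kfun_def by (simp add: sum_distrib_left mult.assoc)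
  also have "\<dots> = (\<Sum>z\<in>G. \<Sum>x\<in>F. cnj (c x) * a z * k x z)" by (rule sum.swap)
  also have "\<dots> = (\<Sum>z\<in>G. a z * cnj (ks c F z))"
    unfolding ks_def kfun_def
  proof (simp add: sum_distrib_left mult_ac, intro sum.cong refl)
    fix z x show "a z * (cnj (c x) * k x z) = a z * (cnj (c x) * cnj (k z x))"
      using herm[of z x] by simp
  qed
  finally show ?thesis .
qed

lemma P_repr: assumes "f \<in> kspan k"
  shows "\<exists>F c. finite F \<and> f = ks c F \<and> (\<forall>g. pre_ip k f g = (\<Sum>x\<in>F. cnj (c x) * g x))"
proof -
  define p where "p = (SOME (F, c). finite F \<and> f = (\<lambda>z. \<Sum>x\<in>F. c x * kfun k x z))"
  have ex: "\<exists>q. (\<lambda>(F, c). finite F \<and> f = (\<lambda>z. \<Sum>x\<in>F. c x * kfun k x z)) q"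
    using assms unfolding kspan_def by auto
  have "(\<lambda>(F, c). finite F \<and> f = (\<lambda>z. \<Sum>x\<in>F. c x * kfun k x z)) p"
    unfolding p_def by (rule someI_ex[OF ex])
  moreover obtain F c where pF1: "p = (F, c)" by (cases p)
  ultimately have pF2: "finite F" "f = ks c F" unfolding ks_def by simp_all
  note pF = pF1 pF2
  have "\<forall>g. pre_ip k f g = (\<Sum>x\<in>F. cnj (c x) * g x)"
  proof
    fix g
    have "pre_ip k f g = (case p of (F, c) \<Rightarrow> \<Sum>x\<in>F. cnj (c x) * g x)"
      unfolding pre_ip_def p_def Let_def by (rule refl)
    thus "pre_ip k f g = (\<Sum>x\<in>F. cnj (c x) * g x)" unfolding pF(1) prod.case .
  qed
  thus ?thesis using pF(2,3) by (intro exI[of _ F] exI[of _ c]) simp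
qed

lemma P_eq: assumes "finite F" "f = ks c F" "g \<in> kspan k"
  shows "pre_ip k f g = (\<Sum>x\<in>F. cnj (c x) * g x)"
proof -
  have fk: "f \<in> kspan k" unfolding kspan_iff using assms(1,2) by (intro exI[of _ F] exI[of _ c]) simp
  obtain F0 c0 where 0: "finite F0" "f = ks c0 F0" "\<forall>g. pre_ip k f g = (\<Sum>x\<in>F0. cnj (c0 x) * g x)"
    using P_repr[OF fk] by auto
  obtain G a where g: "finite G" "g = ks a G" using assms(3) unfolding kspan_iff by auto
  have e: "ks c0 F0 = ks c F" using 0(2) assms(2) by (rule HOL.trans[OF HOL.sym])
  have "pre_ip k f g = (\<Sum>x\<in>F0. cnj (c0 x) * ks a G x)" using 0(3) g(2) by simp
  also have "\<dots> = (\<Sum>z\<in>G. a z * cnj (ks c0 F0 z))" by (rule swap[OF 0(1) g(1)])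
  also have "(\<Sum>z\<in>G. a z * cnj (ks c0 F0 z)) = (\<Sum>z\<in>G. a z * cnj (ks c F z))" by (simp only: e)
  also have "\<dots> = (\<Sum>x\<in>F. cnj (c x) * ks a G x)" by (rule swap[OF assms(1) g(1), symmetric])
  finally show ?thesis using g(2) by (simp only:)
qed


lemma ks_ext: assumes "finite H" "F \<subseteq> H" shows "ks c F = ks (\<lambda>x. if x \<in> F then c x else 0) H"
  unfolding ks_def by (rule ext, rule sum.mono_neutral_cong_left) (use assms in auto)

lemma kspan_lc: assumes "f \<in> kspan k" "g \<in> kspan k" shows "(\<lambda>z. a * f z + b * g z) \<in> kspan k"
proof -
  obtain F c where F: "finite F" "f = ks c F" using assms(1) unfolding kspan_iff by auto
  obtain G d where G: "finite G" "g = ks d G" using assms(2) unfolding kspan_iff by auto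
  have e1: "ks c F = ks (\<lambda>x. if x \<in> F then c x else 0) (F \<union> G)" by (rule ks_ext) (use F G in auto)
  have e2: "ks d G = ks (\<lambda>x. if x \<in> G then d x else 0) (F \<union> G)" by (rule ks_ext) (use F G in auto)
  have "(\<lambda>z. a * f z + b * g z) = ks (\<lambda>x. a * (if x \<in> F then c x else 0) + b * (if x \<in> G then d x else 0)) (F \<union> G)"
    unfolding F(2) G(2) e1 e2 unfolding ks_def by (simp add: sum_distrib_left sum.distrib algebra_simps)
  thus ?thesis unfolding kspan_iff using F(1) G(1) by blast
qed

lemma kspan_add: "f \<in> kspan k \<Longrightarrow> g \<in> kspan k \<Longrightarrow> f + g \<in> kspan k"
  using kspan_lc[of f g 1 1] by (simp add: plus_fun_def)
lemma kspan_diff: "f \<in> kspan k \<Longrightarrow> g \<in> kspan k \<Longrightarrow> f - g \<in> kspan k"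
  using kspan_lc[of f g 1 "-1"] by (simp add: fun_diff_def)
lemma kspan_scal: "f \<in> kspan k \<Longrightarrow> (\<lambda>z. a * f z) \<in> kspan k"
  using kspan_lc[of f f a 0] by simp
lemma kspan_kfun: "kfun k x \<in> kspan k"
proof -
  have "kfun k x = ks (\<lambda>_. 1) {x}" unfolding ks_def by simp
  thus ?thesis unfolding kspan_iff by blast
qed

lemma P_right: assumes "f \<in> kspan k"
  shows "pre_ip k f (\<lambda>z. a * g z + b * h z) = a * pre_ip k f g + b * pre_ip k f h"
proof -
  obtain F c where F: "finite F" "\<forall>g. pre_ip k f g = (\<Sum>x\<in>F. cnj (c x) * g x)" using P_repr[OF assms] by auto
  show ?thesis unfolding F(2)[rule_format] by (simp add: sum_distrib_left sum.distrib algebra_simps)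
qed

lemma P_add_right: "f \<in> kspan k \<Longrightarrow> pre_ip k f (g + h) = pre_ip k f g + pre_ip k f h"
  using P_right[of f 1 g 1 h] by (simp add: plus_fun_def)
lemma P_diff_right: "f \<in> kspan k \<Longrightarrow> pre_ip k f (g - h) = pre_ip k f g - pre_ip k f h"
  using P_right[of f 1 g "-1" h] by (simp add: fun_diff_def)
lemma P_scal_right: "f \<in> kspan k \<Longrightarrow> pre_ip k f (\<lambda>z. a * g z) = a * pre_ip k f g"
  using P_right[of f a g 0 g] by simp

lemma P_herm: assumes "f \<in> kspan k" "g \<in> kspan k" shows "pre_ip k g f = cnj (pre_ip k f g)"
proof -
  obtain F c where F: "finite F" "f = ks c F" using assms(1) unfolding kspan_iff by auto
  obtain G d where G: "finite G" "g = ks d G" using assms(2) unfolding kspan_iff by auto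
  have "pre_ip k f g = (\<Sum>x\<in>F. cnj (c x) * ks d G x)" using P_eq[OF F assms(2)] G(2) by simp
  also have "\<dots> = (\<Sum>z\<in>G. d z * cnj (ks c F z))" by (rule swap[OF F(1) G(1)])
  finally have 1: "pre_ip k f g = (\<Sum>z\<in>G. d z * cnj (f z))" using F(2) by simp
  have 2: "pre_ip k g f = (\<Sum>z\<in>G. cnj (d z) * f z)" using P_eq[OF G assms(1)] .
  show ?thesis unfolding 1 2 by (simp add: mult.commute)
qed

lemma P_pos: assumes "f \<in> kspan k" shows "Im (pre_ip k f f) = 0" "Re (pre_ip k f f) \<ge> 0"
proof -
  obtain F c where F: "finite F" "f = ks c F" using assms(1) unfolding kspan_iff by auto
  have "pre_ip k f f = (\<Sum>x\<in>F. cnj (c x) * ks c F x)" using P_eq[OF F assms] F(2) by simp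
  also have "\<dots> = (\<Sum>x\<in>F. \<Sum>y\<in>F. k x y * cnj (c x) * c y)"
    unfolding ks_def kfun_def by (simp add: sum_distrib_left mult_ac)
  finally have e: "pre_ip k f f = (\<Sum>x\<in>F. \<Sum>y\<in>F. k x y * cnj (c x) * c y)" .
  show "Im (pre_ip k f f) = 0" unfolding e by (rule conjunct1[OF pdI[OF F(1)]])
  show "Re (pre_ip k f f) \<ge> 0" unfolding e by (rule conjunct2[OF pdI[OF F(1)]])
qed

definition N :: "('v \<Rightarrow> complex) \<Rightarrow> real" where "N f = sqrt (Re (pre_ip k f f))"

lemma N_nonneg: "f \<in> kspan k \<Longrightarrow> N f \<ge> 0" unfolding N_def using P_pos(2) by simp

lemma P_self: assumes "f \<in> kspan k" shows "pre_ip k f f = of_real ((N f)\<^sup>2)"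
  using P_pos[OF assms] unfolding N_def by (simp add: complex_eq_iff)

lemma quad: fixes A B X :: real assumes "A \<ge> 0" "B \<ge> 0" "X \<ge> 0" "\<And>t. 0 \<le> A - 2*t*X + t^2*X*B"
  shows "X \<le> A*B"
proof (cases "X = 0")
  case True thus ?thesis using assms by simp
next
  case False hence X: "X > 0" using assms by simp
  show ?thesis
  proof (cases "B = 0")
    case True
    have "0 \<le> A - 2*((A+1)/(2*X))*X + ((A+1)/(2*X))^2*X*B" by (rule assms(4))
    thus ?thesis using True X by (simp add: field_simps)
  next
    case False hence B: "B > 0" using assms by simp
    have "0 \<le> A - 2*(1/B)*X + (1/B)^2*X*B" by (rule assms(4))
    hence "0 \<le> A - X/B" using B by (simp add: field_simps power2_eq_square)
    thus ?thesis using B by (simp add: field_simps)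
  qed
qed

lemma CS: assumes "f \<in> kspan k" "g \<in> kspan k" shows "cmod (pre_ip k f g) \<le> N f * N g"
proof -
  define w where "w = pre_ip k f g"
  define A where "A = Re (pre_ip k f f)"
  define B where "B = Re (pre_ip k g g)"
  have A: "pre_ip k f f = of_real A" "A \<ge> 0" using P_pos[OF assms(1)] unfolding A_def by (simp_all add: complex_eq_iff)
  have B: "pre_ip k g g = of_real B" "B \<ge> 0" using P_pos[OF assms(2)] unfolding B_def by (simp_all add: complex_eq_iff)
  have gf: "pre_ip k g f = cnj w" unfolding w_def by (rule P_herm[OF assms])
  have main: "0 \<le> A - 2*t*(cmod w)^2 + t^2*(cmod w)^2*B" for t
  proof -
    define \<mu> where "\<mu> = of_real t * cnj w"
    define h where "h = (\<lambda>z. 1 * f z + (-\<mu>) * g z)"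
    have hk: "h \<in> kspan k" unfolding h_def by (rule kspan_lc[OF assms])
    have fh: "pre_ip k f h = of_real A - \<mu> * w" unfolding h_def P_right[OF assms(1)] A w_def by simp
    have gh: "pre_ip k g h = cnj w - \<mu> * of_real B" unfolding h_def P_right[OF assms(2)] B gf by simp
    have "pre_ip k h h = 1 * pre_ip k h f + (-\<mu>) * pre_ip k h g"
      unfolding h_def[symmetric] using P_right[OF hk, of 1 f "-\<mu>" g] h_def by simp
    also have "\<dots> = cnj (pre_ip k f h) - \<mu> * cnj (pre_ip k g h)"
      using P_herm[OF assms(1) hk] P_herm[OF assms(2) hk] by simp
    also have "\<dots> = of_real (A - 2*t*(cmod w)^2 + t^2*(cmod w)^2*B)"
      unfolding fh gh \<mu>_def cmod_power2 by (simp add: complex_eq_iff power2_eq_square algebra_simps)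
    finally show ?thesis using P_pos(2)[OF hk] by simp
  qed
  have "(cmod w)^2 \<le> A * B" by (rule quad[OF A(2) B(2) _ main]) simp
  hence "cmod w \<le> sqrt (A * B)" by (metis norm_ge_zero real_le_rsqrt)
  thus ?thesis unfolding w_def N_def A_def[symmetric] B_def[symmetric] by (simp add: real_sqrt_mult)
qed

lemma N_scal: assumes "f \<in> kspan k" shows "N (\<lambda>z. a * f z) = cmod a * N f"
proof -
  have h: "(\<lambda>z. a * f z) \<in> kspan k" by (rule kspan_scal[OF assms])
  have "pre_ip k (\<lambda>z. a * f z) (\<lambda>z. a * f z) = a * cnj (pre_ip k f (\<lambda>z. a * f z))"
    using P_scal_right[OF h, of a f] P_herm[OF assms h] by simp
  also have "\<dots> = a * cnj a * of_real ((N f)\<^sup>2)" using P_scal_right[OF assms, of a f] P_self[OF assms] by simp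
  also have "\<dots> = of_real ((cmod a * N f)\<^sup>2)"
    unfolding complex_norm_square[symmetric] power_mult_distrib by simp
  finally show ?thesis unfolding N_def using P_pos(2)[OF assms] by simp
qed

lemma N_tri: assumes "f \<in> kspan k" "g \<in> kspan k" shows "N (f + g) \<le> N f + N g"
proof -
  have fg: "f + g \<in> kspan k" by (rule kspan_add[OF assms])
  have "pre_ip k (f + g) (f + g) = cnj (pre_ip k f f) + cnj (pre_ip k f g) + (cnj (pre_ip k g f) + cnj (pre_ip k g g))"
    using P_add_right[OF fg, of f g] P_herm[OF assms(1) fg] P_herm[OF assms(2) fg]
      P_add_right[OF assms(1), of f g] P_add_right[OF assms(2), of f g] by simp
  hence "Re (pre_ip k (f + g) (f + g)) = (N f)\<^sup>2 + 2 * Re (pre_ip k f g) + (N g)\<^sup>2"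
    using P_self[OF assms(1)] P_self[OF assms(2)] P_herm[OF assms] by simp
  also have "\<dots> \<le> (N f)\<^sup>2 + 2 * (N f * N g) + (N g)\<^sup>2"
    using CS[OF assms] complex_Re_le_cmod[of "pre_ip k f g"] by linarith
  also have "\<dots> = (N f + N g)\<^sup>2" by (simp add: power2_eq_square algebra_simps)
  finally have "Re (pre_ip k (f + g) (f + g)) \<le> (N f + N g)\<^sup>2" .
  hence "N (f + g) \<le> sqrt ((N f + N g)\<^sup>2)" unfolding N_def by (rule real_sqrt_le_mono)
  thus ?thesis using N_nonneg[OF assms(1)] N_nonneg[OF assms(2)] by simp
qed

lemma N_sym: assumes "f \<in> kspan k" "g \<in> kspan k" shows "N (f - g) = N (g - f)"
proof -
  have "g - f = (\<lambda>z. (-1) * (f - g) z)" by (simp add: fun_eq_iff)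
  thus ?thesis using N_scal[OF kspan_diff[OF assms], of "-1"] by simp
qed

lemma N_tri_diff: assumes "f \<in> kspan k" "g \<in> kspan k" "h \<in> kspan k" shows "N (f - h) \<le> N (f - g) + N (g - h)"
proof -
  have "f - h = (f - g) + (g - h)" by simp
  thus ?thesis using N_tri[OF kspan_diff[OF assms(1,2)] kspan_diff[OF assms(2,3)]] by simp
qed

lemma N_rev: assumes "f \<in> kspan k" "g \<in> kspan k" shows "\<bar>N f - N g\<bar> \<le> N (f - g)"
proof -
  have z: "0 \<in> kspan k" using kspan_diff[OF assms(1) assms(1)] by simp
  have "N f \<le> N (f - g) + N g" using N_tri_diff[OF assms(1) assms(2) z] by simp
  moreover have "N g \<le> N (g - f) + N f" using N_tri_diff[OF assms(2) assms(1) z] by simp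
  ultimately show ?thesis using N_sym[OF assms] by linarith
qed


lemma P_zero: "f \<in> kspan k \<Longrightarrow> pre_ip k f 0 = 0"
  using P_scal_right[of f 0 0] by (simp add: zero_fun_def)
lemma kspan_zero: "0 \<in> kspan k"
  using kspan_diff[OF kspan_kfun[of x] kspan_kfun[of x]] by simp
lemma N_zero: "N 0 = 0" unfolding N_def using P_zero[OF kspan_zero] by simp

lemma N_tri2: assumes "f \<in> kspan k" "g \<in> kspan k" shows "N (f - g) \<le> N f + N g"
  using N_tri_diff[OF assms(1) kspan_zero assms(2)] N_sym[OF kspan_zero assms(2)] by simp

lemma N_lc: assumes "f \<in> kspan k" "g \<in> kspan k" shows "N (\<lambda>z. a * f z + b * g z) \<le> cmod a * N f + cmod b * N g"
proof -
  have "(\<lambda>z. a * f z + b * g z) = (\<lambda>z. a * f z) + (\<lambda>z. b * g z)" by (simp add: fun_eq_iff)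
  hence "N (\<lambda>z. a * f z + b * g z) \<le> N (\<lambda>z. a * f z) + N (\<lambda>z. b * g z)"
    using N_tri[OF kspan_scal[OF assms(1)] kspan_scal[OF assms(2)]] by simp
  thus ?thesis using N_scal[OF assms(1)] N_scal[OF assms(2)] by simp
qed

lemma P_lim: assumes "f \<in> kspan k" "\<And>x. (\<lambda>n. fs n x) \<longlonglongrightarrow> \<phi> x"
  shows "(\<lambda>n. pre_ip k f (fs n)) \<longlonglongrightarrow> pre_ip k f \<phi>"
proof -
  obtain F c where F: "finite F" "\<forall>g. pre_ip k f g = (\<Sum>x\<in>F. cnj (c x) * g x)" using P_repr[OF assms(1)] by auto
  show ?thesis unfolding F(2)[rule_format] by (intro tendsto_intros assms(2))
qed

lemma approx_in: "approx_seq k \<phi> fs \<Longrightarrow> fs n \<in> kspan k"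
  unfolding approx_seq_def by blast
lemma approx_pt: "approx_seq k \<phi> fs \<Longrightarrow> (\<lambda>n. fs n x) \<longlonglongrightarrow> \<phi> x"
  unfolding approx_seq_def by blast

lemma approx_cauchy: assumes "approx_seq k \<phi> fs" "e > 0"
  shows "\<exists>M. \<forall>m\<ge>M. \<forall>n\<ge>M. N (fs m - fs n) < e"
proof -
  obtain M where M: "\<forall>m\<ge>M. \<forall>n\<ge>M. Re (pre_ip k (fs m - fs n) (fs m - fs n)) < e^2"
    using assms unfolding approx_seq_def by (meson zero_less_power)
  have "N (fs m - fs n) < e" if "m \<ge> M" "n \<ge> M" for m n
  proof -
    have "Re (pre_ip k (fs m - fs n) (fs m - fs n)) < e^2" using M that by blast
    hence "N (fs m - fs n) < sqrt (e^2)" unfolding N_def by (rule real_sqrt_less_mono)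
    thus ?thesis using assms(2) by simp
  qed
  thus ?thesis by blast
qed

lemma approx_intro: assumes "\<And>n. fs n \<in> kspan k" "\<And>x. (\<lambda>n. fs n x) \<longlonglongrightarrow> \<phi> x"
  "\<And>e. e > 0 \<Longrightarrow> \<exists>M. \<forall>m\<ge>M. \<forall>n\<ge>M. N (fs m - fs n) < e"
  shows "approx_seq k \<phi> fs"
  unfolding approx_seq_def
proof (intro conjI allI impI assms(1,2))
  fix e :: real assume e: "e > 0"
  obtain M where M: "\<forall>m\<ge>M. \<forall>n\<ge>M. N (fs m - fs n) < sqrt e" using assms(3)[of "sqrt e"] e by auto
  have "Re (pre_ip k (fs m - fs n) (fs m - fs n)) < e" if "m \<ge> M" "n \<ge> M" for m n
  proof -
    have d: "fs m - fs n \<in> kspan k" by (rule kspan_diff[OF assms(1) assms(1)])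
    have "N (fs m - fs n) < sqrt e" using M that by blast
    hence "(N (fs m - fs n))^2 < (sqrt e)^2" using N_nonneg[OF d] by (intro power_strict_mono) auto
    thus ?thesis using P_self[OF d] e by simp
  qed
  thus "\<exists>N. \<forall>m\<ge>N. \<forall>n\<ge>N. Re (pre_ip k (fs m - fs n) (fs m - fs n)) < e" by blast
qed

lemma approx_bdd: assumes "approx_seq k \<phi> fs" shows "\<exists>B. \<forall>n. N (fs n) \<le> B"
proof -
  note fk = approx_in[OF assms]
  obtain M where M: "\<forall>m\<ge>M. \<forall>n\<ge>M. N (fs m - fs n) < 1" using approx_cauchy[OF assms, of 1] by auto
  define B where "B = (\<Sum>i\<le>M. N (fs i)) + 1"
  have "N (fs n) \<le> B" for n
  proof (cases "n \<le> M")
    case True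
    have "N (fs n) \<le> (\<Sum>i\<le>M. N (fs i))"
      by (rule member_le_sum) (use True N_nonneg[OF fk] in auto)
    thus ?thesis unfolding B_def by simp
  next
    case False
    have "N (fs n) \<le> N (fs M) + N (fs n - fs M)" using N_rev[OF fk fk, of n M] by linarith
    also have "\<dots> \<le> N (fs M) + 1" using M False by (meson add_left_mono less_imp_le nle_le order_refl)
    also have "N (fs M) \<le> (\<Sum>i\<le>M. N (fs i))"
      by (rule member_le_sum) (use N_nonneg[OF fk] in auto)
    finally show ?thesis unfolding B_def by simp
  qed
  thus ?thesis by blast
qed

lemma approx_Nconv: assumes "approx_seq k \<phi> fs" shows "convergent (\<lambda>n. N (fs n))"
proof -
  note fk = approx_in[OF assms]
  have "Cauchy (\<lambda>n. N (fs n))"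
  proof (rule metric_CauchyI)
    fix e :: real assume "e > 0"
    then obtain M where M: "\<forall>m\<ge>M. \<forall>n\<ge>M. N (fs m - fs n) < e" using approx_cauchy[OF assms] by blast
    show "\<exists>M. \<forall>m\<ge>M. \<forall>n\<ge>M. dist (N (fs m)) (N (fs n)) < e"
      using M N_rev[OF fk fk] unfolding dist_real_def by (meson le_less_trans)
  qed
  thus ?thesis by (simp add: Cauchy_convergent_iff)
qed

lemma approx_lc: assumes "approx_seq k \<phi> fs" "approx_seq k \<psi> gs"
  shows "approx_seq k (\<lambda>z. a * \<phi> z + b * \<psi> z) (\<lambda>n z. a * fs n z + b * gs n z)"
proof (rule approx_intro)
  note fk = approx_in[OF assms(1)] and gk = approx_in[OF assms(2)]
  show "\<And>n. (\<lambda>z. a * fs n z + b * gs n z) \<in> kspan k" by (rule kspan_lc[OF fk gk])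
  show "\<And>x. (\<lambda>n. a * fs n x + b * gs n x) \<longlonglongrightarrow> a * \<phi> x + b * \<psi> x"
    by (intro tendsto_intros approx_pt[OF assms(1)] approx_pt[OF assms(2)])
  fix e :: real assume e: "e > 0"
  define e' where "e' = e / (cmod a + cmod b + 1)"
  have e': "e' > 0" unfolding e'_def using e by (simp add: add_nonneg_pos)
  obtain M1 where M1: "\<forall>m\<ge>M1. \<forall>n\<ge>M1. N (fs m - fs n) < e'" using approx_cauchy[OF assms(1) e'] by blast
  obtain M2 where M2: "\<forall>m\<ge>M2. \<forall>n\<ge>M2. N (gs m - gs n) < e'" using approx_cauchy[OF assms(2) e'] by blast
  have "N ((\<lambda>z. a * fs m z + b * gs m z) - (\<lambda>z. a * fs n z + b * gs n z)) < e" if "m \<ge> max M1 M2" "n \<ge> max M1 M2" for m n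
  proof -
    have eq: "(\<lambda>z. a * fs m z + b * gs m z) - (\<lambda>z. a * fs n z + b * gs n z) = (\<lambda>z. a * (fs m - fs n) z + b * (gs m - gs n) z)"
      by (simp add: fun_eq_iff algebra_simps)
    have "N (\<lambda>z. a * (fs m - fs n) z + b * (gs m - gs n) z) \<le> cmod a * N (fs m - fs n) + cmod b * N (gs m - gs n)"
      by (rule N_lc[OF kspan_diff[OF fk fk] kspan_diff[OF gk gk]])
    also have "\<dots> \<le> cmod a * e' + cmod b * e'"
      using M1 M2 that by (intro add_mono mult_left_mono) (auto intro: less_imp_le)
    also have "\<dots> < e"
    proof -
      have "cmod a + cmod b + 1 \<noteq> 0" using norm_ge_zero[of a] norm_ge_zero[of b] by linarith
      hence "(cmod a + cmod b + 1) * e' = e" unfolding e'_def by simp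
      hence "cmod a * e' + cmod b * e' + e' = e" by (simp add: algebra_simps)
      thus ?thesis using e' by linarith
    qed
    finally show ?thesis unfolding eq .
  qed
  thus "\<exists>M. \<forall>m\<ge>M. \<forall>n\<ge>M. N ((\<lambda>z. a * fs m z + b * gs m z) - (\<lambda>z. a * fs n z + b * gs n z)) < e" by blast
qed

lemma approx_diff: assumes "approx_seq k \<phi> fs" "approx_seq k \<psi> gs"
  shows "approx_seq k (\<phi> - \<psi>) (\<lambda>n. fs n - gs n)"
  using approx_lc[OF assms, of 1 "-1"] by (simp add: fun_diff_def)

lemma approx_const: "f \<in> kspan k \<Longrightarrow> approx_seq k f (\<lambda>n. f)"
  by (rule approx_intro) (auto simp: N_zero)

lemma approx_zero: assumes "approx_seq k 0 hs" shows "(\<lambda>n. N (hs n)) \<longlonglongrightarrow> 0"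
proof -
  note hk = approx_in[OF assms]
  obtain B where B: "\<forall>n. N (hs n) \<le> B" using approx_bdd[OF assms] by blast
  have B0: "B \<ge> 0" using order_trans[OF N_nonneg[OF hk, of 0] spec[OF B, of 0]] .
  have "(\<lambda>n. (N (hs n))^2) \<longlonglongrightarrow> 0"
  proof (rule LIMSEQ_I)
    fix r :: real assume r: "r > 0"
    obtain M where M: "\<forall>m\<ge>M. \<forall>n\<ge>M. N (hs m - hs n) < r / (2 * (B + 1))"
      using approx_cauchy[OF assms, of "r / (2 * (B + 1))"] r B0 by auto
    have "(\<lambda>n. pre_ip k (hs M) (hs n)) \<longlonglongrightarrow> pre_ip k (hs M) 0"
      by (rule P_lim[OF hk approx_pt[OF assms]])
    hence "(\<lambda>n. pre_ip k (hs M) (hs n)) \<longlonglongrightarrow> 0" using P_zero[OF hk] by simp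
    then obtain M2 where M2: "\<forall>n\<ge>M2. cmod (pre_ip k (hs M) (hs n) - 0) < r / 2"
      using LIMSEQ_D[of _ 0 "r/2"] r by fastforce
    have "norm ((N (hs n))^2 - 0) < r" if "n \<ge> max M M2" for n
    proof -
      have "pre_ip k (hs n) (hs n) = pre_ip k (hs n) (hs n - hs M) + pre_ip k (hs n) (hs M)"
        using P_diff_right[OF hk, of n "hs n" "hs M"] by simp
      also have "pre_ip k (hs n) (hs M) = cnj (pre_ip k (hs M) (hs n))" by (rule P_herm[OF hk hk])
      finally have e: "pre_ip k (hs n) (hs n) = pre_ip k (hs n) (hs n - hs M) + cnj (pre_ip k (hs M) (hs n))" .
      have "(N (hs n))^2 = cmod (pre_ip k (hs n) (hs n))" using P_self[OF hk, of n] N_nonneg[OF hk, of n] by (simp add: norm_power)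
      also have "\<dots> \<le> cmod (pre_ip k (hs n) (hs n - hs M)) + cmod (pre_ip k (hs M) (hs n))"
        unfolding e by (metis complex_mod_cnj norm_triangle_ineq)
      also have "cmod (pre_ip k (hs n) (hs n - hs M)) \<le> N (hs n) * N (hs n - hs M)"
        by (rule CS[OF hk kspan_diff[OF hk hk]])
      also have "\<dots> \<le> B * (r / (2 * (B + 1)))"
        using B M that N_nonneg[OF hk] N_nonneg[OF kspan_diff[OF hk hk]] B0
        by (intro mult_mono) (auto intro: less_imp_le)
      also have "\<dots> < r / 2" using B0 r by (simp add: field_simps)
      finally have "(N (hs n))^2 < r/2 + cmod (pre_ip k (hs M) (hs n))" by simp
      moreover have "cmod (pre_ip k (hs M) (hs n)) < r / 2" using M2 that by auto
      ultimately show ?thesis by simp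
    qed
    thus "\<exists>no. \<forall>n\<ge>no. norm ((N (hs n))^2 - 0) < r" by blast
  qed
  hence "(\<lambda>n. sqrt ((N (hs n))^2)) \<longlonglongrightarrow> sqrt 0" by (rule tendsto_real_sqrt)
  thus ?thesis using N_nonneg[OF hk] by simp
qed

lemma approx_same: assumes "approx_seq k \<phi> fs" "approx_seq k \<phi> gs"
  shows "(\<lambda>n. N (fs n - gs n)) \<longlonglongrightarrow> 0"
  using approx_zero approx_diff[OF assms] by simp


lemma rkhs_approx: assumes "\<phi> \<in> rkhs k" shows "approx_seq k \<phi> (SOME fs. approx_seq k \<phi> fs)"
proof -
  obtain fs where "approx_seq k \<phi> fs" using assms unfolding rkhs_def by blast
  thus ?thesis by (rule someI[where P="\<lambda>fs. approx_seq k \<phi> fs"])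
qed

lemma rkhsI: "approx_seq k \<phi> fs \<Longrightarrow> \<phi> \<in> rkhs k"
  unfolding rkhs_def by blast

lemma P_diff_bound: assumes "f \<in> kspan k" "f' \<in> kspan k" "g \<in> kspan k" "g' \<in> kspan k"
  shows "cmod (pre_ip k f g - pre_ip k f' g') \<le> N f * N (g - g') + N g' * N (f - f')"
proof -
  have "pre_ip k f g - pre_ip k f' g' = pre_ip k f (g - g') + cnj (pre_ip k g' (f - f'))"
    using P_diff_right[OF assms(1), of g g'] P_diff_right[OF assms(4), of f f']
      P_herm[OF assms(4) assms(1)] P_herm[OF assms(4) assms(2)] by simp
  hence "cmod (pre_ip k f g - pre_ip k f' g') \<le> cmod (pre_ip k f (g - g')) + cmod (pre_ip k g' (f - f'))"
    by (metis complex_mod_cnj norm_triangle_ineq)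
  also have "\<dots> \<le> N f * N (g - g') + N g' * N (f - f')"
    by (intro add_mono CS assms kspan_diff)
  finally show ?thesis .
qed

lemma approx_bdd0: assumes "approx_seq k \<phi> fs" shows "\<exists>B\<ge>0. \<forall>n. N (fs n) \<le> B"
proof -
  obtain B where B: "\<forall>n. N (fs n) \<le> B" using approx_bdd[OF assms] by blast
  have "B \<ge> 0" using order_trans[OF N_nonneg[OF approx_in[OF assms], of 0] spec[OF B, of 0]] .
  thus ?thesis using B by blast
qed

lemma ip_conv: assumes "approx_seq k \<phi> fs" "approx_seq k \<psi> gs"
  shows "convergent (\<lambda>n. pre_ip k (fs n) (gs n))"
proof -
  note fk = approx_in[OF assms(1)] and gk = approx_in[OF assms(2)]
  obtain Bf where Bf: "Bf \<ge> 0" "\<forall>n. N (fs n) \<le> Bf" using approx_bdd0[OF assms(1)] by blast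
  obtain Bg where Bg: "Bg \<ge> 0" "\<forall>n. N (gs n) \<le> Bg" using approx_bdd0[OF assms(2)] by blast
  have "Cauchy (\<lambda>n. pre_ip k (fs n) (gs n))"
  proof (rule metric_CauchyI)
    fix e :: real assume e: "e > 0"
    define e' where "e' = e / (Bf + Bg + 1)"
    have e': "e' > 0" unfolding e'_def using e Bf Bg by simp
    obtain M1 where M1: "\<forall>m\<ge>M1. \<forall>n\<ge>M1. N (fs m - fs n) < e'" using approx_cauchy[OF assms(1) e'] by blast
    obtain M2 where M2: "\<forall>m\<ge>M2. \<forall>n\<ge>M2. N (gs m - gs n) < e'" using approx_cauchy[OF assms(2) e'] by blast
    have "dist (pre_ip k (fs m) (gs m)) (pre_ip k (fs n) (gs n)) < e" if "m \<ge> max M1 M2" "n \<ge> max M1 M2" for m n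
    proof -
      have "dist (pre_ip k (fs m) (gs m)) (pre_ip k (fs n) (gs n)) \<le> N (fs m) * N (gs m - gs n) + N (gs n) * N (fs m - fs n)"
        unfolding dist_norm by (rule P_diff_bound[OF fk fk gk gk])
      also have "\<dots> \<le> Bf * e' + Bg * e'"
        using Bf Bg M1 M2 that N_nonneg[OF fk] N_nonneg[OF gk] N_nonneg[OF kspan_diff[OF fk fk]] N_nonneg[OF kspan_diff[OF gk gk]]
        by (intro add_mono mult_mono) (auto intro: less_imp_le)
      also have "\<dots> < e"
      proof -
        have "(Bf + Bg + 1) * e' = e" unfolding e'_def using Bf Bg by simp
        hence "Bf * e' + Bg * e' + e' = e" by (simp add: algebra_simps)
        thus ?thesis using e' by linarith
      qed
      finally show ?thesis .
    qed
    thus "\<exists>M. \<forall>m\<ge>M. \<forall>n\<ge>M. dist (pre_ip k (fs m) (gs m)) (pre_ip k (fs n) (gs n)) < e" by blast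
  qed
  thus ?thesis by (simp add: Cauchy_convergent_iff)
qed

lemma ip_same: assumes "approx_seq k \<phi> fs" "approx_seq k \<phi> fs'" "approx_seq k \<psi> gs" "approx_seq k \<psi> gs'"
  shows "(\<lambda>n. pre_ip k (fs n) (gs n) - pre_ip k (fs' n) (gs' n)) \<longlonglongrightarrow> 0"
proof -
  note fk = approx_in[OF assms(1)] and fk' = approx_in[OF assms(2)]
   and gk = approx_in[OF assms(3)] and gk' = approx_in[OF assms(4)]
  obtain Bf where Bf: "Bf \<ge> 0" "\<forall>n. N (fs n) \<le> Bf" using approx_bdd0[OF assms(1)] by blast
  obtain Bg where Bg: "Bg \<ge> 0" "\<forall>n. N (gs' n) \<le> Bg" using approx_bdd0[OF assms(4)] by blast
  have lim: "(\<lambda>n. Bf * N (gs n - gs' n) + Bg * N (fs n - fs' n)) \<longlonglongrightarrow> Bf * 0 + Bg * 0"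
    by (intro tendsto_intros approx_same[OF assms(3,4)] approx_same[OF assms(1,2)])
  show ?thesis
  proof (rule Lim_null_comparison[OF _ lim[simplified]])
    show "\<forall>\<^sub>F n in sequentially. norm (pre_ip k (fs n) (gs n) - pre_ip k (fs' n) (gs' n)) \<le> Bf * N (gs n - gs' n) + Bg * N (fs n - fs' n)"
    proof (rule always_eventually, rule allI)
      fix n
      have "norm (pre_ip k (fs n) (gs n) - pre_ip k (fs' n) (gs' n)) \<le> N (fs n) * N (gs n - gs' n) + N (gs' n) * N (fs n - fs' n)"
        by (rule P_diff_bound[OF fk fk' gk gk'])
      also have "\<dots> \<le> Bf * N (gs n - gs' n) + Bg * N (fs n - fs' n)"
        using Bf Bg N_nonneg[OF kspan_diff[OF fk fk']] N_nonneg[OF kspan_diff[OF gk gk']]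
        by (intro add_mono mult_right_mono) auto
      finally show "norm (pre_ip k (fs n) (gs n) - pre_ip k (fs' n) (gs' n)) \<le> Bf * N (gs n - gs' n) + Bg * N (fs n - fs' n)" .
    qed
  qed
qed

lemma ipH: assumes "approx_seq k \<phi> fs" "approx_seq k \<psi> gs"
  shows "(\<lambda>n. pre_ip k (fs n) (gs n)) \<longlonglongrightarrow> rkhs_ip k \<phi> \<psi>"
proof -
  define fs0 where "fs0 = (SOME fs. approx_seq k \<phi> fs)"
  define gs0 where "gs0 = (SOME gs. approx_seq k \<psi> gs)"
  have a0: "approx_seq k \<phi> fs0" unfolding fs0_def by (rule rkhs_approx[OF rkhsI[OF assms(1)]])
  have b0: "approx_seq k \<psi> gs0" unfolding gs0_def by (rule rkhs_approx[OF rkhsI[OF assms(2)]])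
  have e: "rkhs_ip k \<phi> \<psi> = lim (\<lambda>n. pre_ip k (fs0 n) (gs0 n))" unfolding rkhs_ip_def fs0_def gs0_def ..
  have c: "(\<lambda>n. pre_ip k (fs0 n) (gs0 n)) \<longlonglongrightarrow> rkhs_ip k \<phi> \<psi>"
    unfolding e using ip_conv[OF a0 b0] by (simp add: convergent_LIMSEQ_iff)
  have "(\<lambda>n. pre_ip k (fs0 n) (gs0 n) + (pre_ip k (fs n) (gs n) - pre_ip k (fs0 n) (gs0 n))) \<longlonglongrightarrow> rkhs_ip k \<phi> \<psi> + 0"
    by (intro tendsto_intros c ip_same[OF assms(1) a0 assms(2) b0])
  thus ?thesis by simp
qed

lemma ipnormH: assumes "approx_seq k \<phi> fs" shows "(\<lambda>n. N (fs n)) \<longlonglongrightarrow> ipnorm (rkhs_ip k) \<phi>"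
proof -
  note fk = approx_in[OF assms]
  obtain L where L: "(\<lambda>n. N (fs n)) \<longlonglongrightarrow> L" using approx_Nconv[OF assms] unfolding convergent_def by blast
  have L0: "L \<ge> 0" by (rule LIMSEQ_le_const[OF L]) (use N_nonneg[OF fk] in auto)
  have "(\<lambda>n. complex_of_real ((N (fs n))^2)) \<longlonglongrightarrow> complex_of_real (L^2)" by (intro tendsto_intros L)
  moreover have "(\<lambda>n. complex_of_real ((N (fs n))^2)) \<longlonglongrightarrow> rkhs_ip k \<phi> \<phi>"
    using ipH[OF assms assms] P_self[OF fk] by simp
  ultimately have "rkhs_ip k \<phi> \<phi> = complex_of_real (L^2)" using LIMSEQ_unique by blast
  hence "ipnorm (rkhs_ip k) \<phi> = L" unfolding ipnorm_def using L0 by simp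
  thus ?thesis using L by simp
qed

lemma kspan_rkhs: "f \<in> kspan k \<Longrightarrow> f \<in> rkhs k"
  by (rule rkhsI[OF approx_const])

lemma ipnormH_kspan: assumes "f \<in> kspan k" shows "ipnorm (rkhs_ip k) f = N f"
  using ipnormH[OF approx_const[OF assms]] by (simp add: LIMSEQ_const_iff)

lemma rkhs_lc: assumes "\<phi> \<in> rkhs k" "\<psi> \<in> rkhs k" shows "(\<lambda>z. a * \<phi> z + b * \<psi> z) \<in> rkhs k"
  by (rule rkhsI[OF approx_lc[OF rkhs_approx[OF assms(1)] rkhs_approx[OF assms(2)]]])

lemma rkhs_diff: assumes "\<phi> \<in> rkhs k" "\<psi> \<in> rkhs k" shows "\<phi> - \<psi> \<in> rkhs k"
  by (rule rkhsI[OF approx_diff[OF rkhs_approx[OF assms(1)] rkhs_approx[OF assms(2)]]])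

lemma ipnormH_tri: assumes "\<phi> \<in> rkhs k" "\<psi> \<in> rkhs k"
  shows "ipnorm (rkhs_ip k) (\<phi> - \<psi>) \<le> ipnorm (rkhs_ip k) \<phi> + ipnorm (rkhs_ip k) \<psi>"
proof -
  note a = rkhs_approx[OF assms(1)] and b = rkhs_approx[OF assms(2)]
  show ?thesis
    by (rule LIMSEQ_le[OF ipnormH[OF approx_diff[OF a b]] tendsto_add[OF ipnormH[OF a] ipnormH[OF b]]])
       (use N_tri2[OF approx_in[OF a] approx_in[OF b]] in auto)
qed

lemma ks_single: "kfun k y = ks (\<lambda>_. 1) {y}" unfolding ks_def by simp

lemma pt_bound: assumes "\<phi> \<in> rkhs k" shows "cmod (\<phi> y) \<le> N (kfun k y) * ipnorm (rkhs_ip k) \<phi>"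
proof -
  note a = rkhs_approx[OF assms]
  note fk = approx_in[OF a]
  define fs where "fs = (SOME fs. approx_seq k \<phi> fs)"
  have e: "fs n y = pre_ip k (kfun k y) (fs n)" for n
    using P_eq[of "{y}" "kfun k y" "\<lambda>_. 1" "fs n"] ks_single[of y] fk unfolding fs_def by simp
  show ?thesis
  proof (rule LIMSEQ_le[OF tendsto_norm[OF approx_pt[OF a, of y]] tendsto_mult[OF tendsto_const ipnormH[OF a]]])
    show "\<exists>M. \<forall>n\<ge>M. norm ((SOME fs. approx_seq k \<phi> fs) n y) \<le> N (kfun k y) * N ((SOME fs. approx_seq k \<phi> fs) n)"
      using e CS[OF kspan_kfun fk] unfolding fs_def by metis
  qed
qed

lemma ipH_ks: assumes "finite F" "\<psi> \<in> rkhs k"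
  shows "rkhs_ip k (ks c F) \<psi> = (\<Sum>x\<in>F. cnj (c x) * \<psi> x)"
    "rkhs_ip k \<psi> (ks c F) = cnj (\<Sum>x\<in>F. cnj (c x) * \<psi> x)"
proof -
  have u: "ks c F \<in> kspan k" unfolding kspan_iff using assms(1) by blast
  note b = rkhs_approx[OF assms(2)]
  define gs where "gs = (SOME fs. approx_seq k \<psi> fs)"
  have b': "approx_seq k \<psi> gs" unfolding gs_def by (rule b)
  have e: "pre_ip k (ks c F) (gs n) = (\<Sum>x\<in>F. cnj (c x) * gs n x)" for n
    by (rule P_eq[OF assms(1) refl approx_in[OF b']])
  have l: "(\<lambda>n. pre_ip k (ks c F) (gs n)) \<longlonglongrightarrow> (\<Sum>x\<in>F. cnj (c x) * \<psi> x)"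
    unfolding e by (intro tendsto_intros approx_pt[OF b'])
  show "rkhs_ip k (ks c F) \<psi> = (\<Sum>x\<in>F. cnj (c x) * \<psi> x)"
    using LIMSEQ_unique[OF ipH[OF approx_const[OF u] b'] l] .
  have "(\<lambda>n. pre_ip k (gs n) (ks c F)) \<longlonglongrightarrow> cnj (\<Sum>x\<in>F. cnj (c x) * \<psi> x)"
    using tendsto_cnj[OF l] P_herm[OF u approx_in[OF b']] by simp
  thus "rkhs_ip k \<psi> (ks c F) = cnj (\<Sum>x\<in>F. cnj (c x) * \<psi> x)"
    using LIMSEQ_unique[OF ipH[OF b' approx_const[OF u]]] by blast
qed


end

lemma sum_delta1: "finite F \<Longrightarrow> (\<Sum>x\<in>F. g x * (if z = x then 1 else 0)) = (if z \<in> F then g z else (0::complex))"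
proof -
  assume f: "finite F"
  have "(\<Sum>x\<in>F. g x * (if z = x then 1 else 0)) = (\<Sum>x\<in>F. if z = x then g x else 0)" by (rule sum.cong) auto
  thus ?thesis using f by simp
qed
lemma sum_delta2: "finite F \<Longrightarrow> (\<Sum>x\<in>F. g x * (if x = z then 1 else 0)) = (if z \<in> F then g z else (0::complex))"
proof -
  assume f: "finite F"
  have "(\<Sum>x\<in>F. g x * (if x = z then 1 else 0)) = (\<Sum>x\<in>F. if x = z then g x else 0)" by (rule sum.cong) auto
  thus ?thesis using f by simp
qed

definition dsum :: "('v \<Rightarrow> complex) \<Rightarrow> 'v set \<Rightarrow> ('v \<Rightarrow> complex)" where
  "dsum c F = (\<lambda>z. \<Sum>x\<in>F. c x * delta x z)"

lemma dsum_eq: "finite F \<Longrightarrow> dsum c F = (\<lambda>z. if z \<in> F then c z else 0)"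
  unfolding dsum_def delta_def by (simp add: fun_eq_iff sum_delta1)

lemma dspan_iff: "f \<in> dspan \<longleftrightarrow> (\<exists>F c. finite F \<and> f = dsum c F)"
  unfolding dspan_def dsum_def by (rule mem_Collect_eq)

lemma fin_l2: assumes "finite F" "\<And>z. z \<notin> F \<Longrightarrow> g z = 0" shows "g \<in> l2"
proof -
  have "(\<lambda>x. (cmod (g x))\<^sup>2) summable_on F" using assms(1) by simp
  moreover have "(\<lambda>x. (cmod (g x))\<^sup>2) summable_on UNIV \<longleftrightarrow> (\<lambda>x. (cmod (g x))\<^sup>2) summable_on F"
    by (rule summable_on_cong_neutral) (use assms(2) in auto)
  ultimately show ?thesis unfolding l2_def by simp
qed

lemma l2_fin: assumes "finite F" "\<And>z. z \<notin> F \<Longrightarrow> cnj (g z) * h z = 0"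
  shows "l2_ip g h = (\<Sum>x\<in>F. cnj (g x) * h x)"
proof -
  have "l2_ip g h = infsum (\<lambda>x. cnj (g x) * h x) F"
    unfolding l2_ip_def by (rule infsum_cong_neutral) (use assms(2) in auto)
  thus ?thesis using assms(1) by simp
qed

lemma dspan_l2: assumes "f \<in> dspan" shows "f \<in> l2"
proof -
  obtain F c where F: "finite F" "f = dsum c F" using assms unfolding dspan_iff by auto
  show ?thesis unfolding F(2) dsum_eq[OF F(1)] by (rule fin_l2[OF F(1)]) simp
qed

lemma l2_diff: assumes "f \<in> l2" "g \<in> l2" shows "f - g \<in> l2"
proof -
  have s: "(\<lambda>x. 2 * (cmod (f x))\<^sup>2 + 2 * (cmod (g x))\<^sup>2) summable_on UNIV"
    using assms unfolding l2_def by (intro summable_on_add summable_on_cmult_right) auto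
  have "(\<lambda>x. (cmod ((f - g) x))\<^sup>2) summable_on UNIV"
  proof (rule summable_on_comparison_test[OF s])
    fix x
    have "cmod ((f - g) x) \<le> cmod (f x) + cmod (g x)" by (simp add: norm_triangle_ineq4)
    hence "(cmod ((f - g) x))\<^sup>2 \<le> (cmod (f x) + cmod (g x))\<^sup>2" by (simp add: power_mono)
    also have "\<dots> \<le> 2 * (cmod (f x))\<^sup>2 + 2 * (cmod (g x))\<^sup>2"
    proof -
      have "0 \<le> (cmod (f x) - cmod (g x))\<^sup>2" by simp
      thus ?thesis unfolding power2_sum power2_diff by linarith
    qed
    finally show "(cmod ((f - g) x))\<^sup>2 \<le> 2 * (cmod (f x))\<^sup>2 + 2 * (cmod (g x))\<^sup>2" .
  qed simp
  thus ?thesis unfolding l2_def mem_Collect_eq .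
qed

lemma l2_pt: assumes "d \<in> l2" shows "cmod (d y) \<le> ipnorm l2_ip d"
proof -
  have s: "(\<lambda>x. (cmod (d x))\<^sup>2) summable_on UNIV" using assms unfolding l2_def by simp
  have e: "l2_ip d d = infsum (\<lambda>x. complex_of_real ((cmod (d x))\<^sup>2)) UNIV"
  proof -
    have "\<And>z::complex. cnj z * z = complex_of_real ((cmod z)\<^sup>2)" unfolding complex_norm_square by (rule mult.commute)
    thus ?thesis unfolding l2_ip_def by simp
  qed
  have "Re (l2_ip d d) = infsum (\<lambda>x. (cmod (d x))\<^sup>2) UNIV"
    unfolding e using infsum_Re[OF summable_on_of_real[OF s]] by simp
  moreover have "infsum (\<lambda>x. (cmod (d x))\<^sup>2) {y} \<le> infsum (\<lambda>x. (cmod (d x))\<^sup>2) UNIV"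
    by (rule infsum_mono_neutral) (use s in auto)
  ultimately have "(cmod (d y))\<^sup>2 \<le> Re (l2_ip d d)" by simp
  hence "sqrt ((cmod (d y))\<^sup>2) \<le> sqrt (Re (l2_ip d d))" by (rule real_sqrt_le_mono)
  thus ?thesis unfolding ipnorm_def by simp
qed

locale rk2 = rk + assumes dl: "\<forall>x. delta x \<in> rkhs k"
begin

lemma indep: assumes "finite H" "ks c H = 0" "y \<in> H" shows "c y = 0"
proof -
  note a = rkhs_approx[OF dl[rule_format, of y]]
  define gs where "gs = (SOME fs. approx_seq k (delta y) fs)"
  have a': "approx_seq k (delta y) gs" unfolding gs_def by (rule a)
  have z: "(\<Sum>x\<in>H. cnj (c x) * gs n x) = 0" for n
  proof -
    obtain G d where G: "finite G" "gs n = ks d G" using approx_in[OF a', of n] unfolding kspan_iff by auto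
    have "(\<Sum>x\<in>H. cnj (c x) * gs n x) = (\<Sum>x\<in>H. cnj (c x) * ks d G x)" using G(2) by simp
    also have "\<dots> = (\<Sum>z\<in>G. d z * cnj (ks c H z))" by (rule swap[OF assms(1) G(1)])
    also have "\<dots> = 0" using assms(2) by simp
    finally show ?thesis .
  qed
  have "(\<lambda>n. \<Sum>x\<in>H. cnj (c x) * gs n x) \<longlonglongrightarrow> (\<Sum>x\<in>H. cnj (c x) * delta y x)"
    by (intro tendsto_intros approx_pt[OF a'])
  hence "(\<Sum>x\<in>H. cnj (c x) * delta y x) = 0" unfolding z by (simp add: LIMSEQ_const_iff)
  thus ?thesis unfolding delta_def using sum_delta2[OF assms(1)] assms(3) by simp
qed

definition Top where
  "Top f = (SOME g. \<exists>F c. finite F \<and> f = ks c F \<and> g = dsum c F)"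

lemma ks_diff: "ks (\<lambda>x. c x - d x) H = ks c H - ks d H"
  unfolding ks_def by (simp add: fun_eq_iff algebra_simps sum_subtractf)

lemma Top_eq: assumes "finite F" shows "Top (ks c F) = dsum c F"
proof -
  define P where "P = (\<lambda>g. \<exists>F' c'. finite F' \<and> ks c F = ks c' F' \<and> g = dsum c' F')"
  have "P (dsum c F)" unfolding P_def using assms by blast
  hence "P (SOME g. P g)" by (rule someI[of P])
  moreover have "Top (ks c F) = (SOME g. P g)" unfolding Top_def P_def ..
  ultimately have "P (Top (ks c F))" by simp
  then obtain F' c' where F': "finite F'" "ks c F = ks c' F'" "Top (ks c F) = dsum c' F'" unfolding P_def by blast
  define H where "H = F \<union> F'"
  have H: "finite H" unfolding H_def using assms F' by simp
  define d where "d = (\<lambda>x. (if x \<in> F then c x else 0) - (if x \<in> F' then c' x else 0))"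
  have "ks d H = ks (\<lambda>x. if x \<in> F then c x else 0) H - ks (\<lambda>x. if x \<in> F' then c' x else 0) H"
    unfolding d_def by (rule ks_diff)
  also have "\<dots> = ks c F - ks c' F'"
    using ks_ext[OF H, of F c] ks_ext[OF H, of F' c'] unfolding H_def by simp
  finally have "ks d H = 0" using F'(2) by simp
  hence dz: "\<And>y. y \<in> H \<Longrightarrow> d y = 0" using indep[OF H] by blast
  have "dsum c' F' = dsum c F"
    unfolding dsum_eq[OF assms] dsum_eq[OF F'(1)]
  proof (rule ext)
    fix z show "(if z \<in> F' then c' z else 0) = (if z \<in> F then c z else 0)"
    proof (cases "z \<in> H")
      case True thus ?thesis using dz[OF True] unfolding d_def by simp
    next
      case False thus ?thesis unfolding H_def by simp
    qed
  qed
  thus ?thesis using F'(3) by simp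
qed

lemma Top_supp: assumes "f \<in> kspan k" shows "\<exists>F c. finite F \<and> f = ks c F \<and> Top f = (\<lambda>z. if z \<in> F then c z else 0)"
proof -
  obtain F c where F: "finite F" "f = ks c F" using assms unfolding kspan_iff by auto
  show ?thesis using F Top_eq[OF F(1), of c] dsum_eq[OF F(1)] by auto
qed

lemma Top_l2: assumes "f \<in> kspan k" shows "Top f \<in> l2"
proof -
  obtain F c where F: "finite F" "Top f = (\<lambda>z. if z \<in> F then c z else 0)" using Top_supp[OF assms] by blast
  show ?thesis unfolding F(2) by (rule fin_l2[OF F(1)]) simp
qed

lemma Top_lin: assumes "f \<in> kspan k" "g \<in> kspan k"
  shows "Top (\<lambda>z. a * f z + b * g z) = (\<lambda>z. a * Top f z + b * Top g z)"
proof -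
  obtain F c where F: "finite F" "f = ks c F" using assms(1) unfolding kspan_iff by auto
  obtain G d where G: "finite G" "g = ks d G" using assms(2) unfolding kspan_iff by auto
  have e1: "ks c F = ks (\<lambda>x. if x \<in> F then c x else 0) (F \<union> G)" by (rule ks_ext) (use F G in auto)
  have e2: "ks d G = ks (\<lambda>x. if x \<in> G then d x else 0) (F \<union> G)" by (rule ks_ext) (use F G in auto)
  have "(\<lambda>z. a * f z + b * g z) = ks (\<lambda>x. a * (if x \<in> F then c x else 0) + b * (if x \<in> G then d x else 0)) (F \<union> G)"
    unfolding F(2) G(2) e1 e2 unfolding ks_def by (simp add: sum_distrib_left sum.distrib algebra_simps)
  moreover have H: "finite (F \<union> G)" using F(1) G(1) by simp
  ultimately have 1: "Top (\<lambda>z. a * f z + b * g z) = dsum (\<lambda>x. a * (if x \<in> F then c x else 0) + b * (if x \<in> G then d x else 0)) (F \<union> G)"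
    using Top_eq by (simp only:)
  have 2: "Top f = dsum c F" using Top_eq[OF F(1)] F(2) by (simp only:)
  have 3: "Top g = dsum d G" using Top_eq[OF G(1)] G(2) by (simp only:)
  show ?thesis unfolding 1 2 3 dsum_eq[OF H] dsum_eq[OF F(1)] dsum_eq[OF G(1)] by (rule ext) auto
qed

lemma Top_kfun: "Top (kfun k x) = delta x"
  unfolding ks_single by (simp add: Top_eq dsum_eq delta_def fun_eq_iff)

lemma Top_bound: assumes "f \<in> kspan k" shows "cmod (Top f y) \<le> N f * ipnorm (rkhs_ip k) (delta y)"
proof -
  obtain F c where F: "finite F" "f = ks c F" using assms unfolding kspan_iff by auto
  note a = rkhs_approx[OF dl[rule_format, of y]]
  define gs where "gs = (SOME fs. approx_seq k (delta y) fs)"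
  have a': "approx_seq k (delta y) gs" unfolding gs_def by (rule a)
  have tf: "Top f y = (if y \<in> F then c y else 0)" using Top_eq[OF F(1)] F(2) dsum_eq[OF F(1)] by simp
  have e: "pre_ip k f (gs n) = (\<Sum>x\<in>F. cnj (c x) * gs n x)" for n by (rule P_eq[OF F approx_in[OF a']])
  have "(\<lambda>n. pre_ip k f (gs n)) \<longlonglongrightarrow> (\<Sum>x\<in>F. cnj (c x) * delta y x)"
    unfolding e by (intro tendsto_intros approx_pt[OF a'])
  also have "(\<Sum>x\<in>F. cnj (c x) * delta y x) = cnj (Top f y)"
    unfolding delta_def tf using sum_delta2[OF F(1), of "\<lambda>x. cnj (c x)" y] by simp
  finally have l: "(\<lambda>n. pre_ip k f (gs n)) \<longlonglongrightarrow> cnj (Top f y)" .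
  have "norm (cnj (Top f y)) \<le> N f * ipnorm (rkhs_ip k) (delta y)"
  proof (rule LIMSEQ_le[OF tendsto_norm[OF l] tendsto_mult[OF tendsto_const ipnormH[OF a']]])
    show "\<exists>M. \<forall>n\<ge>M. norm (pre_ip k f (gs n)) \<le> N f * N (gs n)"
      using CS[OF assms approx_in[OF a']] by blast
  qed
  thus ?thesis by simp
qed

lemma dspan_rkhs: assumes "f \<in> dspan" shows "f \<in> rkhs k"
proof -
  obtain F c where F: "finite F" "f = dsum c F" using assms unfolding dspan_iff by auto
  have "dsum c F \<in> rkhs k" using F(1)
  proof (induction F rule: finite_induct)
    case empty
    have "dsum c {} = 0" unfolding dsum_def by (simp add: fun_eq_iff)
    thus ?case using kspan_rkhs[OF kspan_zero] by (simp only:)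
  next
    case (insert x F)
    have "dsum c (insert x F) = (\<lambda>z. c x * delta x z + 1 * dsum c F z)"
      unfolding dsum_def using insert(1,2) by (simp add: fun_eq_iff)
    thus ?case using rkhs_lc[OF dl[rule_format, of x] insert(3), of "c x" 1] by (simp only:)
  qed
  thus ?thesis using F(2) by simp
qed


lemma ipnormH_nonneg: assumes "\<phi> \<in> rkhs k" shows "ipnorm (rkhs_ip k) \<phi> \<ge> 0"
proof -
  note a = rkhs_approx[OF assms]
  show ?thesis by (rule LIMSEQ_le_const[OF ipnormH[OF a]]) (use N_nonneg[OF approx_in[OF a]] in auto)
qed

lemma Top_closable: "closable (rkhs k) (rkhs_ip k) l2 l2_ip (kspan k) Top"
  unfolding closable_def
proof (intro allI impI)
  fix u w1 w2
  assume h1: "(u, w1) \<in> graph_closure (rkhs k) (rkhs_ip k) l2 l2_ip (kspan k) Top"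
     and h2: "(u, w2) \<in> graph_closure (rkhs k) (rkhs_ip k) l2 l2_ip (kspan k) Top"
  obtain us where u: "u \<in> rkhs k" and w1: "w1 \<in> l2" and us: "\<forall>n. us n \<in> kspan k"
    "(\<lambda>n. ipnorm (rkhs_ip k) (us n - u)) \<longlonglongrightarrow> 0" "(\<lambda>n. ipnorm l2_ip (Top (us n) - w1)) \<longlonglongrightarrow> 0"
    using h1 unfolding graph_closure_def by auto
  obtain vs where w2: "w2 \<in> l2" and vs: "\<forall>n. vs n \<in> kspan k"
    "(\<lambda>n. ipnorm (rkhs_ip k) (vs n - u)) \<longlonglongrightarrow> 0" "(\<lambda>n. ipnorm l2_ip (Top (vs n) - w2)) \<longlonglongrightarrow> 0"
    using h2 unfolding graph_closure_def by auto
  show "w1 = w2"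
  proof (rule ext)
    fix y
    have c1: "(\<lambda>n. Top (us n) y - w1 y) \<longlonglongrightarrow> 0"
    proof (rule Lim_null_comparison[OF _ us(3)], intro always_eventually allI)
      fix n show "norm (Top (us n) y - w1 y) \<le> ipnorm l2_ip (Top (us n) - w1)"
        using l2_pt[OF l2_diff[OF Top_l2[OF us(1)[rule_format, of n]] w1], of y] by simp
    qed
    have c2: "(\<lambda>n. Top (vs n) y - w2 y) \<longlonglongrightarrow> 0"
    proof (rule Lim_null_comparison[OF _ vs(3)], intro always_eventually allI)
      fix n show "norm (Top (vs n) y - w2 y) \<le> ipnorm l2_ip (Top (vs n) - w2)"
        using l2_pt[OF l2_diff[OF Top_l2[OF vs(1)[rule_format, of n]] w2], of y] by simp
    qed
    define C where "C = ipnorm (rkhs_ip k) (delta y)"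
    have C0: "C \<ge> 0" unfolding C_def by (rule ipnormH_nonneg[OF dl[rule_format]])
    have lim3: "(\<lambda>n. (ipnorm (rkhs_ip k) (us n - u) + ipnorm (rkhs_ip k) (vs n - u)) * C) \<longlonglongrightarrow> (0 + 0) * C"
      by (intro tendsto_intros us(2) vs(2))
    have c3: "(\<lambda>n. Top (us n) y - Top (vs n) y) \<longlonglongrightarrow> 0"
    proof (rule Lim_null_comparison[OF _ lim3[simplified]], intro always_eventually allI)
      fix n
      have uk: "us n \<in> kspan k" and vk: "vs n \<in> kspan k" using us(1) vs(1) by auto
      have eq: "us n - vs n = (\<lambda>z. 1 * us n z + (-1) * vs n z)" by (simp add: fun_eq_iff)
      have "Top (us n - vs n) = (\<lambda>z. 1 * Top (us n) z + (-1) * Top (vs n) z)"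
        unfolding eq by (rule Top_lin[OF uk vk])
      hence "Top (us n) y - Top (vs n) y = Top (us n - vs n) y" by simp
      hence "norm (Top (us n) y - Top (vs n) y) \<le> N (us n - vs n) * C"
        unfolding C_def using Top_bound[OF kspan_diff[OF uk vk], of y] by simp
      also have "N (us n - vs n) = ipnorm (rkhs_ip k) ((us n - u) - (vs n - u))"
        using ipnormH_kspan[OF kspan_diff[OF uk vk]] by simp
      also have "\<dots> \<le> ipnorm (rkhs_ip k) (us n - u) + ipnorm (rkhs_ip k) (vs n - u)"
        by (rule ipnormH_tri[OF rkhs_diff[OF kspan_rkhs[OF uk] u] rkhs_diff[OF kspan_rkhs[OF vk] u]])
      finally show "norm (Top (us n) y - Top (vs n) y) \<le> (ipnorm (rkhs_ip k) (us n - u) + ipnorm (rkhs_ip k) (vs n - u)) * C"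
        using C0 by (simp add: mult_right_mono)
    qed
    have "(\<lambda>n. (Top (vs n) y - w2 y) - (Top (us n) y - w1 y) + (Top (us n) y - Top (vs n) y)) \<longlonglongrightarrow> 0 - 0 + 0"
      by (intro tendsto_intros c1 c2 c3)
    hence "(\<lambda>n. w1 y - w2 y) \<longlonglongrightarrow> 0" by (simp add: algebra_simps)
    thus "w1 y = w2 y" by (simp add: LIMSEQ_const_iff)
  qed
qed

lemma S_closable: "closable l2 l2_ip (rkhs k) (rkhs_ip k) dspan (\<lambda>v. v)"
  unfolding closable_def
proof (intro allI impI)
  fix u w1 w2
  have key: "w = u" if h: "(u, w) \<in> graph_closure l2 l2_ip (rkhs k) (rkhs_ip k) dspan (\<lambda>v. v)" for w
  proof -
    obtain us where u: "u \<in> l2" "w \<in> rkhs k" "\<forall>n. us n \<in> dspan"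
      "(\<lambda>n. ipnorm l2_ip (us n - u)) \<longlonglongrightarrow> 0" "(\<lambda>n. ipnorm (rkhs_ip k) (us n - w)) \<longlonglongrightarrow> 0"
      using h unfolding graph_closure_def by auto
    show ?thesis
    proof (rule ext)
      fix y
      have a: "(\<lambda>n. us n y - u y) \<longlonglongrightarrow> 0"
      proof (rule Lim_null_comparison[OF _ u(4)], intro always_eventually allI)
        fix n show "norm (us n y - u y) \<le> ipnorm l2_ip (us n - u)"
          using l2_pt[OF l2_diff[OF dspan_l2[OF u(3)[rule_format, of n]] u(1)], of y] by simp
      qed
      have lim: "(\<lambda>n. N (kfun k y) * ipnorm (rkhs_ip k) (us n - w)) \<longlonglongrightarrow> N (kfun k y) * 0"
        by (intro tendsto_intros u(5))
      have b: "(\<lambda>n. us n y - w y) \<longlonglongrightarrow> 0"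
      proof (rule Lim_null_comparison[OF _ lim[simplified]], intro always_eventually allI)
        fix n show "norm (us n y - w y) \<le> N (kfun k y) * ipnorm (rkhs_ip k) (us n - w)"
          using pt_bound[OF rkhs_diff[OF dspan_rkhs[OF u(3)[rule_format, of n]] u(2)], of y] by simp
      qed
      have "(\<lambda>n. (us n y - u y) - (us n y - w y)) \<longlonglongrightarrow> 0 - 0" by (intro tendsto_intros a b)
      hence "(\<lambda>n. w y - u y) \<longlonglongrightarrow> 0" by (simp add: algebra_simps)
      thus "w y = u y" by (simp add: LIMSEQ_const_iff)
    qed
  qed
  assume a1: "(u, w1) \<in> graph_closure l2 l2_ip (rkhs k) (rkhs_ip k) dspan (\<lambda>v. v)"
    and a2: "(u, w2) \<in> graph_closure l2 l2_ip (rkhs k) (rkhs_ip k) dspan (\<lambda>v. v)"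
  show "w1 = w2" using key[OF a1] key[OF a2] by simp
qed

lemma adj1: "graph (kspan k) Top \<subseteq> adjoint_graph l2 l2_ip (rkhs k) (rkhs_ip k) dspan (\<lambda>v. v)"
proof
  fix p assume "p \<in> graph (kspan k) Top"
  then obtain u where p: "p = (u, Top u)" and uk: "u \<in> kspan k" unfolding graph_def by auto
  obtain F c where F: "finite F" "u = ks c F" "Top u = (\<lambda>z. if z \<in> F then c z else 0)" using Top_supp[OF uk] by blast
  have "rkhs_ip k v u = l2_ip v (Top u)" if v: "v \<in> dspan" for v
  proof -
    have "rkhs_ip k v u = cnj (\<Sum>x\<in>F. cnj (c x) * v x)" using ipH_ks(2)[OF F(1) dspan_rkhs[OF v]] F(2) by simp
    also have "\<dots> = (\<Sum>x\<in>F. cnj (v x) * c x)" by (simp add: mult.commute)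
    also have "\<dots> = l2_ip v (Top u)" unfolding F(3) by (subst l2_fin[OF F(1)]) (auto intro!: sum.cong)
    finally show ?thesis .
  qed
  thus "p \<in> adjoint_graph l2 l2_ip (rkhs k) (rkhs_ip k) dspan (\<lambda>v. v)"
    unfolding adjoint_graph_def p using kspan_rkhs[OF uk] Top_l2[OF uk] by simp
qed

lemma adj2_aux: assumes v: "v \<in> dspan" shows "(v, v) \<in> adjoint_graph (rkhs k) (rkhs_ip k) l2 l2_ip (kspan k) Top"
proof -
  have "l2_ip (Top u) v = rkhs_ip k u v" if uk: "u \<in> kspan k" for u
  proof -
    obtain F c where F: "finite F" "u = ks c F" "Top u = (\<lambda>z. if z \<in> F then c z else 0)" using Top_supp[OF uk] by blast
    have "l2_ip (Top u) v = (\<Sum>x\<in>F. cnj (c x) * v x)" unfolding F(3) by (subst l2_fin[OF F(1)]) (auto intro!: sum.cong)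
    also have "\<dots> = rkhs_ip k u v" using ipH_ks(1)[OF F(1) dspan_rkhs[OF v]] F(2) by simp
    finally show ?thesis .
  qed
  thus ?thesis unfolding adjoint_graph_def using dspan_l2[OF v] dspan_rkhs[OF v] by simp
qed

lemma adj2: "graph dspan (\<lambda>v. v) \<subseteq> adjoint_graph (rkhs k) (rkhs_ip k) l2 l2_ip (kspan k) Top"
  unfolding graph_def using adj2_aux by auto

end

theorem corollary2p7:
  fixes k :: "'v \<Rightarrow> 'v \<Rightarrow> complex"
  assumes "countable (UNIV :: 'v set)" and "infinite (UNIV :: 'v set)"
    and "pos_def_kernel k"
    and "\<forall>x. delta x \<in> rkhs k"
  shows "\<exists>T S.
     lin_op (kspan k) l2 T \<and> closable (rkhs k) (rkhs_ip k) l2 l2_ip (kspan k) T \<and>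
     lin_op dspan (rkhs k) S \<and> closable l2 l2_ip (rkhs k) (rkhs_ip k) dspan S \<and>
     graph (kspan k) T \<subseteq> adjoint_graph l2 l2_ip (rkhs k) (rkhs_ip k) dspan S \<and>
     graph dspan S \<subseteq> adjoint_graph (rkhs k) (rkhs_ip k) l2 l2_ip (kspan k) T \<and>
     (\<forall>x. T (kfun k x) = delta x) \<and> (\<forall>x. S (delta x) = delta x)"
proof -
  interpret rk2 k by (intro rk2.intro rk.intro assms(3)) (simp add: rk2_axioms_def assms(4))
  have c1: "lin_op (kspan k) l2 Top" unfolding lin_op_def using Top_l2 Top_lin by blast
  have c3: "lin_op dspan (rkhs k) (\<lambda>v. v)" unfolding lin_op_def using dspan_rkhs by simp
  show ?thesis
    apply (rule exI[of _ Top])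
    apply (rule exI[of _ "\<lambda>v. v"])
    using c1 Top_closable c3 S_closable adj1 adj2 Top_kfun by simp
qed

end
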